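(* In the setting of the context, let $$f_P=\frac{\operatorname{tr}^3((\boldsymbol T\boldsymbol V_N)^2)}{\operatorname{tr}^2((\boldsymbol T\boldsymbol V_N)^3)},\qquad K_{f_P}=\frac{\chi^2_{f_P}-f_P}{\sqrt{2f_P}},$$ where $\chi^2_{f_P}$ denotes a chi-square random variable with $f_P$ degrees of freedom. Let $\lambda_1\ge\dots\ge\lambda_{ad}$ be the eigenvalues of $\boldsymbol T\boldsymbol V_N\boldsymbol T$ and $\beta_1=\lambda_1/\sqrt{\sum_\ell\lambda_\ell^2}$. Under $H_0:\boldsymbol T\boldsymbol\mu=\mathbf 0$ and any one of the frameworks (F1)–(F3), as $N\to\infty$: (a) if $\beta_1\to0$, $K_{f_P}$ converges in distribution to $\mathcal N(0,1)$; (b) if $\beta_1\to1$, $K_{f_P}$ converges in distribution to $(C-1)/\sqrt2$ with $C\sim\chi^2_1$.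
   Context: Let $a,d\in\mathbb N$, $n_1,\dots,n_a\in\mathbb N$, $N=\sum_i n_i$. Observations $\boldsymbol X_{i,j}\sim\mathcal N_d(\boldsymbol\mu_i,\boldsymbol\Sigma_i)$, $j=1,\dots,n_i$, $i=1,\dots,a$, are mutually independent, $\boldsymbol\Sigma_i$ symmetric positive definite, $\boldsymbol\mu=(\boldsymbol\mu_1^\top,\dots,\boldsymbol\mu_a^\top)^\top$. Let $\boldsymbol T=\boldsymbol T_W\otimes\boldsymbol T_S$ with $\boldsymbol T_W\in\mathbb R^{a\times a}$, $\boldsymbol T_S\in\mathbb R^{d\times d}$ symmetric idempotent, and $\boldsymbol V_N=\bigoplus_{i=1}^a\frac N{n_i}\boldsymbol\Sigma_i$. Asymptotics: $N\to\infty$, $a,d,n_i$ may depend on $N$, $n_i/N\to\rho_i\in(0,1)$, and one of: (F1) $a$ fixed, $\min(d,n_1,\dots,n_a)\to\infty$; (F2) $d$ fixed, $\min(a,n_1,\dots,n_a)\to\infty$; (F3) $\min(a,d,n_1,\dots,n_a)\to\infty$. *)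

theory Defs
  imports "HOL-Probability.Probability" "Jordan_Normal_Form.Matrix" "Jordan_Normal_Form.Char_Poly"
begin

definition mat_trace :: "real mat \<Rightarrow> real" where
  "mat_trace A = (\<Sum>i<dim_row A. A $$ (i, i))"

definition kron :: "real mat \<Rightarrow> real mat \<Rightarrow> real mat" where
  "kron A B = mat (dim_row A * dim_row B) (dim_col A * dim_col B)
     (\<lambda>(i, j). A $$ (i div dim_row B, j div dim_col B) * B $$ (i mod dim_row B, j mod dim_col B))"

definition sym_mat :: "real mat \<Rightarrow> bool" where
  "sym_mat A \<longleftrightarrow> transpose_mat A = A"

definition sym_idempotent :: "nat \<Rightarrow> real mat \<Rightarrow> bool" where
  "sym_idempotent m A \<longleftrightarrow> A \<in> carrier_mat m m \<and> sym_mat A \<and> A * A = A"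

definition pos_def_mat :: "nat \<Rightarrow> real mat \<Rightarrow> bool" where
  "pos_def_mat m A \<longleftrightarrow> A \<in> carrier_mat m m \<and> sym_mat A \<and>
     (\<forall>v \<in> carrier_vec m. v \<noteq> 0\<^sub>v m \<longrightarrow> v \<bullet> (A *\<^sub>v v) > 0)"

text \<open>Eigenvalues (with multiplicity, i.e. roots of the characteristic polynomial),
  listed in non-increasing order; meaningful for real symmetric matrices.\<close>
definition eigs_desc :: "real mat \<Rightarrow> real list" where
  "eigs_desc A = (SOME ls. sorted_wrt (\<ge>) ls \<and> length ls = dim_row A \<and>
      char_poly A = (\<Prod>l\<leftarrow>ls. [:- l, 1:]))"

definition beta1 :: "real mat \<Rightarrow> real" where
  "beta1 A = hd (eigs_desc A) / sqrt (\<Sum>l\<leftarrow>eigs_desc A. l\<^sup>2)"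

definition chi_sq_density :: "real \<Rightarrow> real \<Rightarrow> real" where
  "chi_sq_density f x = (if x > 0 then x powr (f / 2 - 1) * exp (- x / 2) / (2 powr (f / 2) * Gamma (f / 2)) else 0)"

definition chi_sq_law :: "real \<Rightarrow> real measure" where
  "chi_sq_law f = density lborel (\<lambda>x. ennreal (chi_sq_density f x))"

definition K_law :: "real \<Rightarrow> real measure" where
  "K_law f = distr (chi_sq_law f) borel (\<lambda>x. (x - f) / sqrt (2 * f))"

definition V_mat :: "nat \<Rightarrow> (nat \<Rightarrow> nat) \<Rightarrow> (nat \<Rightarrow> real mat) \<Rightarrow> real mat" where
  "V_mat a n Sig = diag_block_mat
     (map (\<lambda>i. (real (\<Sum>j<a. n j) / real (n i)) \<cdot>\<^sub>m Sig i) [0..<a])"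

definition f_P :: "real mat \<Rightarrow> real mat \<Rightarrow> real" where
  "f_P T V = (mat_trace ((T * V) * (T * V))) ^ 3 / (mat_trace ((T * V) * (T * V) * (T * V))) ^ 2"

definition stack_vec :: "nat \<Rightarrow> nat \<Rightarrow> (nat \<Rightarrow> real vec) \<Rightarrow> real vec" where
  "stack_vec a d mu = vec (a * d) (\<lambda>j. mu (j div d) $ (j mod d))"

end

theory Submission
  imports Defs "Jordan_Normal_Form.Schur_Decomposition" "HOL-Real_Asymp.Real_Asymp"
begin

no_notation vec_nth (infixl "$" 90)
no_notation inner (infix "\<bullet>" 70)



lemma mat_trace_mult:
  assumes "A \<in> carrier_mat n m" "B \<in> carrier_mat m n"
  shows "mat_trace (A*B) = (\<Sum>i<n. \<Sum>j<m. A$$(i,j) * B$$(j,i))"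
  using assms by (auto simp: mat_trace_def scalar_prod_def atLeast0LessThan intro!: sum.cong)

lemma mat_trace_comm:
  assumes "A \<in> carrier_mat n m" "B \<in> carrier_mat m n"
  shows "mat_trace (A*B) = mat_trace (B*A)"
  using assms by (simp add: mat_trace_mult[OF assms] mat_trace_mult[OF assms(2,1)] sum.swap[of _ "{..<n}"] mult.commute)

lemma ut_mult:
  fixes B C :: "'a::comm_ring_1 mat"
  assumes B: "B \<in> carrier_mat n n" and C: "C \<in> carrier_mat n n"
    and uB: "upper_triangular B" and uC: "upper_triangular C"
  shows "upper_triangular (B*C) \<and> (\<forall>i<n. (B*C)$$(i,i) = B$$(i,i)*C$$(i,i))"
proof -
  have e: "(B*C)$$(i,j) = (\<Sum>k\<in>{0..<n}. B$$(i,k) * C$$(k,j))" if "i<n" "j<n" for i j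
    using B C that by (simp add: scalar_prod_def)
  have 1: "upper_triangular (B*C)"
    unfolding upper_triangular_def
  proof (intro allI impI)
    fix i j assume i: "i < dim_row (B*C)" and j: "j < i"
    have i': "i < n" using i B by simp
    show "(B*C)$$(i,j) = 0" unfolding e[OF i' order.strict_trans[OF j i']]
    proof (rule sum.neutral, intro ballI)
      fix k assume "k \<in> {0..<n}"
      show "B$$(i,k)*C$$(k,j) = 0"
      proof (cases "k < i")
        case True then show ?thesis using upper_triangularD[OF uB True] i' B by auto
      next
        case False then have "j < k" using j by simp
        then show ?thesis using upper_triangularD[OF uC \<open>j<k\<close>] \<open>k \<in> {0..<n}\<close> C by auto
      qed
    qed
  qed
  have 2: "(B*C)$$(i,i) = B$$(i,i)*C$$(i,i)" if i: "i<n" for i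
  proof -
    have "(B*C)$$(i,i) = B$$(i,i)*C$$(i,i) + (\<Sum>k\<in>{0..<n}-{i}. B$$(i,k) * C$$(k,i))"
      unfolding e[OF i i] using i by (subst sum.remove[of _ i]) auto
    also have "(\<Sum>k\<in>{0..<n}-{i}. B$$(i,k) * C$$(k,i)) = 0"
    proof (rule sum.neutral, intro ballI)
      fix k assume k: "k \<in> {0..<n}-{i}"
      show "B$$(i,k)*C$$(k,i) = 0"
      proof (cases "k < i")
        case True then show ?thesis using upper_triangularD[OF uB True] i B by auto
      next
        case False then have "i < k" using k by auto
        then show ?thesis using upper_triangularD[OF uC \<open>i<k\<close>] k C by auto
      qed
    qed
    finally show ?thesis by simp
  qed
  show ?thesis using 1 2 by blast
qed

lemma trace_pow_eigs:
  fixes A :: "real mat"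
  assumes A: "A \<in> carrier_mat n n" and c: "char_poly A = (\<Prod>l\<leftarrow>ls. [:-l,1:])"
  shows "mat_trace (A*A) = (\<Sum>l\<leftarrow>ls. l^2) \<and> mat_trace (A*A*A) = (\<Sum>l\<leftarrow>ls. l^3)"
proof -
  obtain B P Q where BPQ: "schur_decomposition A ls = (B,P,Q)" by (cases "schur_decomposition A ls") auto
  from schur_decomposition[OF A c BPQ] have sw: "similar_mat_wit A B P Q" and ut: "upper_triangular B"
    and dg: "diag_mat B = ls" by auto
  from sw A have Bc: "B \<in> carrier_mat n n" and Pc: "P \<in> carrier_mat n n" and Qc: "Q \<in> carrier_mat n n"
    and PQ: "P * Q = 1\<^sub>m n" and QP: "Q * P = 1\<^sub>m n" and AB: "A = P * B * Q"
    unfolding similar_mat_wit_def Let_def by auto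
  have sim: "mat_trace (P * X * Q) = mat_trace X" if X: "X \<in> carrier_mat n n" for X
  proof -
    have "mat_trace (P * X * Q) = mat_trace (Q * (P * X))"
      by (rule mat_trace_comm[of _ n n]) (use X Pc Qc in auto)
    also have "Q * (P * X) = (Q * P) * X" using X Pc Qc by simp
    also have "\<dots> = X" using QP X by simp
    finally show ?thesis .
  qed
  have A2: "A * A = P * (B * B) * Q"
  proof -
    have "A * A = P * B * (Q * P) * B * Q" unfolding AB using Bc Pc Qc
      by (simp add: assoc_mult_mat[of _ n n _ n _ n])
    also have "\<dots> = P * (B * B) * Q" unfolding QP using Bc Pc Qc
      by (simp add: assoc_mult_mat[of _ n n _ n _ n])
    finally show ?thesis .
  qed
  have A3: "A * A * A = P * (B * B * B) * Q"
  proof -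
    have "A * A * A = P * (B * B) * (Q * P) * B * Q" unfolding A2 unfolding AB using Bc Pc Qc
      by (simp add: assoc_mult_mat[of _ n n _ n _ n])
    also have "\<dots> = P * (B * B * B) * Q" unfolding QP using Bc Pc Qc
      by (simp add: assoc_mult_mat[of _ n n _ n _ n])
    finally show ?thesis .
  qed
  from ut_mult[OF Bc Bc ut ut] have u2: "upper_triangular (B*B)" and d2: "\<And>i. i<n \<Longrightarrow> (B*B)$$(i,i) = B$$(i,i)^2"
    by (auto simp: power2_eq_square)
  from ut_mult[OF _ Bc u2 ut] Bc have d3: "\<And>i. i<n \<Longrightarrow> (B*B*B)$$(i,i) = B$$(i,i)^3"
    using d2 by (auto simp: power3_eq_cube power2_eq_square)
  have lsB: "ls = map (\<lambda>i. B$$(i,i)) [0..<n]" using dg Bc unfolding diag_mat_def by auto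
  have s: "(\<Sum>l\<leftarrow>ls. f l) = (\<Sum>i<n. f (B$$(i,i)))" for f :: "real \<Rightarrow> real"
    unfolding lsB by (simp add: sum_list_sum_nth atLeast0LessThan)
  have t2: "mat_trace (B*B) = (\<Sum>i<n. B$$(i,i)^2)" using Bc d2 by (simp add: mat_trace_def)
  have t3: "mat_trace (B*B*B) = (\<Sum>i<n. B$$(i,i)^3)" using Bc d3 by (simp add: mat_trace_def)
  have "mat_trace (A*A) = (\<Sum>l\<leftarrow>ls. l^2)"
    using sim[of "B*B"] Bc t2 s[of "\<lambda>x. x^2"] A2 by simp
  moreover have "mat_trace (A*A*A) = (\<Sum>l\<leftarrow>ls. l^3)"
    using sim[of "B*B*B"] Bc t3 s[of "\<lambda>x. x^3"] A3 by simp
  ultimately show ?thesis ..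
qed



lemma sym_real_eig:
  fixes A :: "real mat"
  assumes A: "A \<in> carrier_mat n n" and S: "transpose_mat A = A"
   and ev: "eigenvector (map_mat complex_of_real A) v \<mu>"
  shows "Im \<mu> = 0"
proof -
  let ?C = "map_mat complex_of_real A"
  from ev A have v: "v \<in> carrier_vec n" and v0: "v \<noteq> 0\<^sub>v n" and Cv: "?C *\<^sub>v v = \<mu> \<cdot>\<^sub>v v"
    unfolding eigenvector_def by auto
  have sym: "A$$(i,j) = A$$(j,i)" if "i<n" "j<n" for i j
    using arg_cong[OF S, of "\<lambda>M. M$$(j,i)"] that A by auto
  have row: "(\<Sum>j<n. of_real (A$$(i,j)) * v$j) = \<mu> * v$i" if i: "i<n" for i
  proof -
    have "(?C *\<^sub>v v)$i = (\<mu> \<cdot>\<^sub>v v)$i" using Cv by simp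
    then show ?thesis using i A v by (simp add: scalar_prod_def atLeast0LessThan)
  qed
  define s where "s = (\<Sum>i<n. cnj (v$i) * (\<Sum>j<n. of_real (A$$(i,j)) * v$j))"
  define N where "N = (\<Sum>i<n. cnj (v$i) * v$i)"
  have sN: "s = \<mu> * N" unfolding s_def N_def using row by (simp add: sum_distrib_left mult_ac)
  have "cnj s = (\<Sum>i<n. \<Sum>j<n. v$i * of_real (A$$(i,j)) * cnj (v$j))"
    unfolding s_def by (simp add: cnj_sum sum_distrib_left mult_ac)
  also have "\<dots> = (\<Sum>j<n. \<Sum>i<n. v$i * of_real (A$$(i,j)) * cnj (v$j))" by (rule sum.swap)
  also have "\<dots> = s" unfolding s_def sum_distrib_left
    by (intro sum.cong refl) (simp add: sym mult_ac)
  finally have cs: "cnj s = s" .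
  have "Im (cnj s) = Im s" using cs by simp
  hence Is: "Im s = 0" by simp
  have IN: "Im N = 0" unfolding N_def by (simp add: Im_sum)
  have "\<exists>i<n. v$i \<noteq> 0" using v v0 by (metis eq_vecI carrier_vecD index_zero_vec(1,2))
  then obtain i where i: "i<n" "v$i \<noteq> 0" by blast
  have RN: "Re N > 0" unfolding N_def Re_sum
  proof (rule sum_pos2[of _ i])
    have "Re (cnj (v $ i) * v $ i) = (Re (v$i))^2 + (Im (v$i))^2" by (simp add: power2_eq_square)
    then show "0 < Re (cnj (v $ i) * v $ i)" using i(2) complex_neq_0 by auto
  qed (use i in \<open>auto\<close>)
  from Is have "Im (\<mu> * N) = 0" using sN by simp
  hence "Im \<mu> * Re N = 0" using IN by simp
  thus ?thesis using RN by simp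
qed
lemma map_poly_prod_lin: "map_poly (of_real :: real \<Rightarrow> complex) (\<Prod>l\<leftarrow>ls. [:-l,1:]) = (\<Prod>l\<leftarrow>ls. [:-of_real l,1:])"
proof -
  interpret m: map_poly_comm_ring_hom "of_real :: real \<Rightarrow> complex" ..
  show ?thesis by (induct ls) (simp_all add: m.hom_mult del: mult_pCons_left pCons_0_as_mult)
qed

lemma map_poly_of_real_inj: "map_poly (of_real :: real \<Rightarrow> complex) p = map_poly of_real q \<Longrightarrow> p = q"
proof -
  interpret m: map_poly_inj_comm_ring_hom "of_real :: real \<Rightarrow> complex" ..
  show "map_poly (of_real :: real \<Rightarrow> complex) p = map_poly of_real q \<Longrightarrow> p = q" by simp
qed

lemma sym_real_split:
  fixes A :: "real mat" assumes A: "A \<in> carrier_mat n n" and S: "transpose_mat A = A"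
  shows "\<exists>ls. length ls = n \<and> char_poly A = (\<Prod>l\<leftarrow>ls. [:-l,1:])"
proof -
  let ?C = "map_mat complex_of_real A"
  have C: "?C \<in> carrier_mat n n" using A by simp
  obtain as where as: "char_poly ?C = (\<Prod>a\<leftarrow>as. [:-a,1:])" "length as = n"
    using char_poly_factorized[OF C] by blast
  have real: "\<forall>a\<in>set as. Im a = 0"
  proof
    fix a assume a: "a \<in> set as"
    have "poly (char_poly ?C) a = 0" unfolding as(1) by (rule linear_poly_root[OF a])
    hence "eigenvalue ?C a" using eigenvalue_root_char_poly[OF C] by simp
    then obtain v where "eigenvector ?C v a" unfolding eigenvalue_def by blast
    thus "Im a = 0" by (rule sym_real_eig[OF A S])
  qed
  define ls where "ls = map Re as"
  have asl: "as = map complex_of_real ls" unfolding ls_def using real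
    by (induct as) (auto simp: complex_eq_iff)
  have "map_poly complex_of_real (char_poly A) = char_poly ?C"
    by (rule sym, rule of_real_hom.char_poly_hom[OF A])
  also have "\<dots> = map_poly complex_of_real (\<Prod>l\<leftarrow>ls. [:-l,1:])"
    unfolding as(1) asl map_poly_prod_lin by (simp add: o_def)
  finally have "char_poly A = (\<Prod>l\<leftarrow>ls. [:-l,1:])" by (rule map_poly_of_real_inj)
  moreover have "length ls = n" using as(2) unfolding ls_def by simp
  ultimately show ?thesis by blast
qed

lemma eigs_desc_spec:
  fixes A :: "real mat" assumes A: "A \<in> carrier_mat n n" and S: "transpose_mat A = A"
  shows "sorted_wrt (\<ge>) (eigs_desc A) \<and> length (eigs_desc A) = n \<and>
      char_poly A = (\<Prod>l\<leftarrow>eigs_desc A. [:- l, 1:])"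
proof -
  obtain ls where ls: "length ls = n" "char_poly A = (\<Prod>l\<leftarrow>ls. [:-l,1:])"
    using sym_real_split[OF A S] by blast
  let ?ls = "rev (sort ls)"
  have "sorted_wrt (\<ge>) ?ls" by (simp add: sorted_wrt_rev flip: sorted_wrt_iff_nth_less)
  moreover have "length ?ls = dim_row A" using ls A by simp
  moreover have "(\<Prod>l\<leftarrow>?ls. [:-l,1:]) = (\<Prod>l\<leftarrow>ls. [:-l,1:])"
    by (simp only: prod_mset_prod_list[symmetric] mset_map mset_rev mset_sort)
  ultimately have "\<exists>ls. sorted_wrt (\<ge>) ls \<and> length ls = dim_row A \<and>
      char_poly A = (\<Prod>l\<leftarrow>ls. [:- l, 1:])" using ls(2) by (intro exI[of _ ?ls]) simp
  from someI_ex[OF this] show ?thesis unfolding eigs_desc_def using A by simp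
qed

lemma eig_nonneg:
  fixes A :: "real mat" assumes A: "A \<in> carrier_mat n n"
    and psd: "\<And>v. v \<in> carrier_vec n \<Longrightarrow> v \<bullet> (A *\<^sub>v v) \<ge> 0"
    and c: "char_poly A = (\<Prod>l\<leftarrow>ls. [:-l,1:])" and l: "l \<in> set ls" shows "l \<ge> 0"
proof -
  have "poly (char_poly A) l = 0" unfolding c by (rule linear_poly_root[OF l])
  hence "eigenvalue A l" using eigenvalue_root_char_poly[OF A] by simp
  then obtain v where "eigenvector A v l" unfolding eigenvalue_def by blast
  with A have v: "v \<in> carrier_vec n" and v0: "v \<noteq> 0\<^sub>v n" and Av: "A *\<^sub>v v = l \<cdot>\<^sub>v v"
    unfolding eigenvector_def by auto
  have "\<exists>i<n. v$i \<noteq> 0" using v v0 by (metis eq_vecI carrier_vecD index_zero_vec(1,2))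
  then obtain i where i: "i<n" "v$i \<noteq> 0" by blast
  have vi: "0 < v$i * v$i" using i(2) by (metis not_real_square_gt_zero)
  have vv: "v \<bullet> v > 0" unfolding scalar_prod_def using v
    by (auto intro!: sum_pos2[of _ i] simp: i vi)
  have "v \<bullet> (A *\<^sub>v v) = l * (v \<bullet> v)" unfolding Av using v by (simp add: scalar_prod_smult_right)
  with psd[OF v] vv show ?thesis by (simp add: zero_le_mult_iff)
qed



lemma kron_carrier: "X \<in> carrier_mat a a \<Longrightarrow> Y \<in> carrier_mat d d \<Longrightarrow> kron X Y \<in> carrier_mat (a*d) (a*d)"
  by (simp add: kron_def)

lemma kron_index: "X \<in> carrier_mat a a \<Longrightarrow> Y \<in> carrier_mat d d \<Longrightarrow> i < a*d \<Longrightarrow> j < a*d \<Longrightarrow>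
   kron X Y $$ (i,j) = X$$(i div d, j div d) * Y$$(i mod d, j mod d)"
  by (simp add: kron_def)

lemma kron_sym: assumes X: "X \<in> carrier_mat a a" and Y: "Y \<in> carrier_mat d d"
  and sX: "transpose_mat X = X" and sY: "transpose_mat Y = Y"
  shows "transpose_mat (kron X Y) = kron X Y"
proof (rule eq_matI)
  fix i j assume i: "i < dim_row (kron X Y)" and j: "j < dim_col (kron X Y)"
  have i': "i < a*d" and j': "j < a*d" using i j X Y by (auto simp: kron_def)
  have d: "d > 0" using i' by (cases d) auto
  have "i div d < a" "j div d < a" using i' j' d by (auto simp: less_mult_imp_div_less)
  moreover have "i mod d < d" "j mod d < d" using d by auto
  ultimately have "X$$(j div d, i div d) = X$$(i div d, j div d)" "Y$$(j mod d, i mod d) = Y$$(i mod d, j mod d)"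
    using arg_cong[OF sX, of "\<lambda>M. M$$(i div d, j div d)"] arg_cong[OF sY, of "\<lambda>M. M$$(i mod d, j mod d)"] X Y
    by auto
  moreover have "transpose_mat (kron X Y) $$ (i, j) = kron X Y $$ (j, i)"
    by (rule index_transpose_mat) (use i' j' X Y in \<open>auto simp: kron_def\<close>)
  ultimately show "transpose_mat (kron X Y) $$ (i, j) = kron X Y $$ (i, j)"
    using i' j' X Y by (simp add: kron_index)
qed (use X Y in \<open>auto simp: kron_def\<close>)

lemma sum_div_mod: fixes f :: "nat \<Rightarrow> 'b::comm_monoid_add" and a d :: nat
  shows "(\<Sum>r<a*d. f r) = (\<Sum>p<a. \<Sum>q<d. f (p*d+q))"
proof (induct a)
  case (Suc a)
  have "(\<Sum>r<Suc a*d. f r) = (\<Sum>r<a*d. f r) + (\<Sum>r\<in>{a*d..<a*d+d}. f r)"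
    by (simp add: lessThan_atLeast0 add.commute sum.atLeastLessThan_concat)
  also have "(\<Sum>r\<in>{a*d..<a*d+d}. f r) = (\<Sum>q<d. f (a*d+q))"
    using sum.shift_bounds_nat_ivl[of f 0 "a*d" d] by (simp add: lessThan_atLeast0 add.commute)
  finally show ?case using Suc by simp
qed simp

lemma kron_idem: assumes X: "X \<in> carrier_mat a a" and Y: "Y \<in> carrier_mat d d"
  and iX: "X * X = X" and iY: "Y * Y = Y"
  shows "kron X Y * kron X Y = kron X Y"
proof (rule eq_matI)
  fix i j assume i: "i < dim_row (kron X Y)" and j: "j < dim_col (kron X Y)"
  have i': "i < a*d" and j': "j < a*d" using i j X Y by (auto simp: kron_def)
  have d: "d > 0" using i' by (cases d) auto
  have ia: "i div d < a" "j div d < a" using i' j' d by (auto simp: less_mult_imp_div_less)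
  have pq: "(p*d+q) div d = p" "(p*d+q) mod d = q" "p*d+q < a*d" if "p<a" "q<d" for p q
  proof -
    show "(p*d+q) div d = p" "(p*d+q) mod d = q" using that d by auto
    have "p*d+q < p*d + d" using that by simp
    also have "\<dots> = Suc p * d" by simp
    also have "\<dots> \<le> a*d" using that by (intro mult_right_mono) auto
    finally show "p*d+q < a*d" .
  qed
  have "(kron X Y * kron X Y) $$ (i,j) = (\<Sum>r<a*d. kron X Y $$ (i,r) * kron X Y $$ (r,j))"
    using i' j' X Y by (simp add: kron_def scalar_prod_def lessThan_atLeast0)
  also have "\<dots> = (\<Sum>p<a. \<Sum>q<d. (X$$(i div d, p) * X$$(p, j div d)) * (Y$$(i mod d, q) * Y$$(q, j mod d)))"
    unfolding sum_div_mod using pq i' j' X Y by (intro sum.cong refl) (simp add: kron_index)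
  also have "\<dots> = (\<Sum>p<a. X$$(i div d, p) * X$$(p, j div d)) * (\<Sum>q<d. Y$$(i mod d, q) * Y$$(q, j mod d))"
    by (simp add: sum_product)
  also have "(\<Sum>p<a. X$$(i div d, p) * X$$(p, j div d)) = (X*X)$$(i div d, j div d)"
    using ia X by (simp add: scalar_prod_def lessThan_atLeast0)
  also have "(\<Sum>q<d. Y$$(i mod d, q) * Y$$(q, j mod d)) = (Y*Y)$$(i mod d, j mod d)"
    using d Y by (simp add: scalar_prod_def lessThan_atLeast0)
  finally show "(kron X Y * kron X Y) $$ (i, j) = kron X Y $$ (i, j)"
    unfolding iX iY using i' j' X Y by (simp add: kron_index)
qed (use X Y in \<open>auto simp: kron_def\<close>)



lemma pd_psd: "pos_def_mat n M \<Longrightarrow> x \<in> carrier_vec n \<Longrightarrow> x \<bullet> (M *\<^sub>v x) \<ge> 0"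
  unfolding pos_def_mat_def by (cases "x = 0\<^sub>v n") (auto intro: less_imp_le)

lemma pd_smult: assumes S: "pos_def_mat d S" and c: "c > 0" shows "pos_def_mat d (c \<cdot>\<^sub>m S)"
proof -
  from S have Sc: "S \<in> carrier_mat d d" and sS: "transpose_mat S = S"
    and pS: "\<And>v. v \<in> carrier_vec d \<Longrightarrow> v \<noteq> 0\<^sub>v d \<Longrightarrow> v \<bullet> (S *\<^sub>v v) > 0"
    unfolding pos_def_mat_def sym_mat_def by auto
  have mv: "(c \<cdot>\<^sub>m S) *\<^sub>v v = c \<cdot>\<^sub>v (S *\<^sub>v v)" if "v \<in> carrier_vec d" for v
    using that Sc by (intro eq_vecI) (auto simp: scalar_prod_smult_left)
  have "transpose_mat (c \<cdot>\<^sub>m S) = c \<cdot>\<^sub>m transpose_mat S" using Sc by (intro eq_matI) auto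
  then have sy: "sym_mat (c \<cdot>\<^sub>m S)" unfolding sym_mat_def sS by simp
  show ?thesis unfolding pos_def_mat_def using Sc sy
    by (auto simp: mv scalar_prod_smult_right pS c)
qed

lemma pd_diag_block: "(\<forall>B\<in>set Bs. pos_def_mat d B) \<Longrightarrow> pos_def_mat (length Bs * d) (diag_block_mat Bs)"
proof (induct Bs)
  case Nil
  show ?case unfolding pos_def_mat_def sym_mat_def by auto
next
  case (Cons B Bs)
  let ?k = "length Bs * d"
  let ?M = "diag_block_mat Bs"
  from Cons have pB: "pos_def_mat d B" and pM: "pos_def_mat ?k ?M" by auto
  from pB have Bc: "B \<in> carrier_mat d d" and sB: "transpose_mat B = B"
    unfolding pos_def_mat_def sym_mat_def by auto
  from pM have Mc: "?M \<in> carrier_mat ?k ?k" and sM: "transpose_mat ?M = ?M"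
    unfolding pos_def_mat_def sym_mat_def by auto
  have eq: "diag_block_mat (B # Bs) = four_block_mat B (0\<^sub>m d ?k) (0\<^sub>m ?k d) ?M"
    using Bc Mc by (simp add: Let_def)
  have car: "diag_block_mat (B # Bs) \<in> carrier_mat (d + ?k) (d + ?k)"
    unfolding eq using Bc Mc by (intro four_block_carrier_mat)
  have sy: "transpose_mat (diag_block_mat (B # Bs)) = diag_block_mat (B # Bs)"
    unfolding eq using Bc Mc by (subst transpose_four_block_mat) (auto simp: sB sM)
  have pos: "v \<bullet> (diag_block_mat (B # Bs) *\<^sub>v v) > 0" if v: "v \<in> carrier_vec (d + ?k)" and v0: "v \<noteq> 0\<^sub>v (d + ?k)" for v
  proof -
    define u where "u = vec_first v d"
    define w where "w = vec_last v ?k"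
    have u: "u \<in> carrier_vec d" and w: "w \<in> carrier_vec ?k" unfolding u_def w_def by auto
    have vuw: "v = u @\<^sub>v w" unfolding u_def w_def using v by simp
    have "diag_block_mat (B # Bs) *\<^sub>v v = (B *\<^sub>v u) @\<^sub>v (?M *\<^sub>v w)"
      unfolding eq vuw by (rule mult_mat_vec_split[OF Bc Mc u w])
    then have qf: "v \<bullet> (diag_block_mat (B # Bs) *\<^sub>v v) = u \<bullet> (B *\<^sub>v u) + w \<bullet> (?M *\<^sub>v w)"
      unfolding vuw using u w Bc Mc by (simp add: scalar_prod_append[of _ d _ ?k])
    have g1: "u \<bullet> (B *\<^sub>v u) \<ge> 0" by (rule pd_psd[OF pB u])
    have g2: "w \<bullet> (?M *\<^sub>v w) \<ge> 0" by (rule pd_psd[OF pM w])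
    show ?thesis
    proof (cases "u = 0\<^sub>v d")
      case True
      then have "w \<noteq> 0\<^sub>v ?k" using v0 vuw by auto
      then have "w \<bullet> (?M *\<^sub>v w) > 0" using pM w unfolding pos_def_mat_def by auto
      then show ?thesis using qf g1 by simp
    next
      case False
      then have "u \<bullet> (B *\<^sub>v u) > 0" using pB u unfolding pos_def_mat_def by auto
      then show ?thesis using qf g2 by simp
    qed
  qed
  show ?case unfolding pos_def_mat_def sym_mat_def using car sy pos by auto
qed

lemma V_pd:
  assumes Sig: "\<And>i. i < a \<Longrightarrow> pos_def_mat d (Sig i)" and n: "\<And>i. i < a \<Longrightarrow> n i \<ge> 1"
  shows "pos_def_mat (a*d) (V_mat a n Sig)"
proof -
  have "(\<forall>B\<in>set (map (\<lambda>i. (real (\<Sum>j<a. n j) / real (n i)) \<cdot>\<^sub>m Sig i) [0..<a]). pos_def_mat d B)"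
  proof
    fix B assume "B \<in> set (map (\<lambda>i. (real (\<Sum>j<a. n j) / real (n i)) \<cdot>\<^sub>m Sig i) [0..<a])"
    then obtain i where i: "i < a" and B: "B = (real (\<Sum>j<a. n j) / real (n i)) \<cdot>\<^sub>m Sig i" by auto
    have "n i \<le> (\<Sum>j<a. n j)" using i by (intro member_le_sum) auto
    then have h1: "real (n i) \<le> real (\<Sum>j<a. n j)" by (rule of_nat_mono)
    have h2: "0 < real (n i)" using n[OF i] by simp
    have "real (\<Sum>j<a. n j) / real (n i) > 0" by (rule divide_pos_pos) (use h1 h2 in linarith)+
    then show "pos_def_mat d B" unfolding B by (rule pd_smult[OF Sig[OF i]])
  qed
  from pd_diag_block[OF this] show ?thesis unfolding V_mat_def by simp
qed

lemma qf_PVP: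
  fixes P V :: "real mat"
  assumes P: "P \<in> carrier_mat N N" and sP: "transpose_mat P = P" and V: "V \<in> carrier_mat N N"
    and w: "w \<in> carrier_vec N"
  shows "w \<bullet> ((P * V * P) *\<^sub>v w) = (P *\<^sub>v w) \<bullet> (V *\<^sub>v (P *\<^sub>v w))"
proof -
  have "(P * V * P) *\<^sub>v w = (P * V) *\<^sub>v (P *\<^sub>v w)" by (rule assoc_mult_mat_vec) (use P V w in auto)
  also have "\<dots> = P *\<^sub>v (V *\<^sub>v (P *\<^sub>v w))" by (rule assoc_mult_mat_vec) (use P V w in auto)
  finally have "(P * V * P) *\<^sub>v w = P *\<^sub>v (V *\<^sub>v (P *\<^sub>v w))" .
  moreover have "w \<bullet> (P *\<^sub>v z) = (P *\<^sub>v w) \<bullet> z" if "z \<in> carrier_vec N" for z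
    using transpose_vec_mult_scalar[OF P that w] sP by simp
  ultimately show ?thesis using P V w by simp
qed

lemma PVP_nonzero:
  fixes P V :: "real mat"
  assumes P: "P \<in> carrier_mat N N" and sP: "transpose_mat P = P" and V: "pos_def_mat N V"
    and P0: "P \<noteq> 0\<^sub>m N N"
  shows "P * V * P \<noteq> 0\<^sub>m N N"
proof
  assume A0: "P * V * P = 0\<^sub>m N N"
  have Vc: "V \<in> carrier_mat N N" using V unfolding pos_def_mat_def by auto
  have col0: "P *\<^sub>v unit_vec N j = 0\<^sub>v N" if j: "j < N" for j
  proof (rule ccontr)
    assume ne: "P *\<^sub>v unit_vec N j \<noteq> 0\<^sub>v N"
    have g: "(P *\<^sub>v unit_vec N j) \<bullet> (V *\<^sub>v (P *\<^sub>v unit_vec N j)) > 0"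
      using V ne P unfolding pos_def_mat_def by auto
    have e: "(P *\<^sub>v unit_vec N j) \<bullet> (V *\<^sub>v (P *\<^sub>v unit_vec N j)) = unit_vec N j \<bullet> ((P * V * P) *\<^sub>v unit_vec N j)"
      using qf_PVP[OF P sP Vc, of "unit_vec N j"] by simp
    have z: "(0\<^sub>m N N :: real mat) *\<^sub>v unit_vec N j = 0\<^sub>v N" by (intro eq_vecI) auto
    have "unit_vec N j \<bullet> ((P * V * P) *\<^sub>v unit_vec N j) = 0" unfolding A0 z
      using scalar_prod_right_zero[of "unit_vec N j" N] by simp
    with g e show False by simp
  qed
  have "P = 0\<^sub>m N N"
  proof (rule eq_matI)
    fix i j assume i: "i < dim_row (0\<^sub>m N N :: real mat)" and j: "j < dim_col (0\<^sub>m N N :: real mat)"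
    have "(P *\<^sub>v unit_vec N j) $ i = row P i \<bullet> unit_vec N j" using i P by simp
    also have "\<dots> = P $$ (i,j)" using i j P by (simp add: scalar_prod_right_unit)
    finally show "P $$ (i,j) = 0\<^sub>m N N $$ (i,j)" using col0[of j] i j by simp
  qed (use P in auto)
  with P0 show False by simp
qed

lemma trace_sq_pos:
  fixes A :: "real mat"
  assumes A: "A \<in> carrier_mat N N" and sA: "transpose_mat A = A" and A0: "A \<noteq> 0\<^sub>m N N"
  shows "mat_trace (A * A) > 0"
proof -
  have sym: "A$$(j,i) = A$$(i,j)" if "i<N" "j<N" for i j
    using arg_cong[OF sA, of "\<lambda>M. M$$(i,j)"] that A by auto
  obtain i j where ij: "i < N" "j < N" "A$$(i,j) \<noteq> 0"
    using A0 A by (metis eq_matI carrier_matD index_zero_mat(1,2,3))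
  have "mat_trace (A*A) = (\<Sum>i<N. \<Sum>j<N. A$$(i,j) * A$$(j,i))" by (rule mat_trace_mult[OF A A])
  also have "\<dots> = (\<Sum>i<N. \<Sum>j<N. (A$$(i,j))^2)" by (intro sum.cong refl) (simp add: sym power2_eq_square)
  also have "\<dots> > 0"
  proof (rule sum_pos2[of _ i])
    show "0 < (\<Sum>j<N. (A $$ (i, j))\<^sup>2)" by (rule sum_pos2[of _ j]) (use ij in auto)
  qed (use ij in \<open>auto intro: sum_nonneg\<close>)
  finally show ?thesis .
qed

lemma PPX: "P \<in> carrier_mat N N \<Longrightarrow> P * P = P \<Longrightarrow> X \<in> carrier_mat N m \<Longrightarrow> P * (P * X) = P * X"
  by (metis assoc_mult_mat)

lemma trace_sandwich:
  fixes P V :: "real mat"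
  assumes P: "P \<in> carrier_mat N N" and V: "V \<in> carrier_mat N N" and PP: "P * P = P"
  shows "mat_trace ((P*V*P) * (P*V*P)) = mat_trace ((P*V)*(P*V))"
    and "mat_trace ((P*V*P) * (P*V*P) * (P*V*P)) = mat_trace ((P*V)*(P*V)*(P*V))"
proof -
  note ass = assoc_mult_mat[of _ N N _ N _ N]
  have pp: "P * (P * X) = P * X" if "X \<in> carrier_mat N N" for X using PPX[OF P PP that] .
  have "mat_trace ((P*V*P) * (P*V*P)) = mat_trace ((V*(P*(V*P))) * P)"
    using P V by (simp add: ass pp mat_trace_comm[of P N N])
  also have "\<dots> = mat_trace (V*(P*(V*P)))" using P V by (simp add: ass pp PP)
  also have "\<dots> = mat_trace ((P*(V*P))*V)" using P V by (simp add: mat_trace_comm[of V N N])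
  also have "\<dots> = mat_trace ((P*V)*(P*V))" using P V by (simp add: ass)
  finally show "mat_trace ((P*V*P) * (P*V*P)) = mat_trace ((P*V)*(P*V))" .
  have "mat_trace ((P*V*P) * (P*V*P) * (P*V*P)) = mat_trace ((V*(P*(V*(P*(V*P))))) * P)"
    using P V by (simp add: ass pp mat_trace_comm[of P N N])
  also have "\<dots> = mat_trace (V*(P*(V*(P*(V*P)))))" using P V by (simp add: ass pp PP)
  also have "\<dots> = mat_trace ((P*(V*(P*(V*P))))*V)" using P V by (simp add: mat_trace_comm[of V N N])
  also have "\<dots> = mat_trace ((P*V)*(P*V)*(P*V))" using P V by (simp add: ass)
  finally show "mat_trace ((P*V*P) * (P*V*P) * (P*V*P)) = mat_trace ((P*V)*(P*V)*(P*V))" .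
qed


lemma list_bounds:
  fixes ls :: "real list"
  assumes so: "sorted_wrt (\<ge>) ls" and nn: "\<forall>l\<in>set ls. l \<ge> 0" and S: "(\<Sum>l\<leftarrow>ls. l^2) > 0"
  shows "hd ls > 0 \<and> (hd ls)^2 \<le> (\<Sum>l\<leftarrow>ls. l^2) \<and> (\<Sum>l\<leftarrow>ls. l^3) \<le> hd ls * (\<Sum>l\<leftarrow>ls. l^2)
     \<and> (hd ls)^3 \<le> (\<Sum>l\<leftarrow>ls. l^3)"
proof (cases ls)
  case Nil then show ?thesis using S by simp
next
  case (Cons m rest)
  have le: "\<forall>l\<in>set ls. l \<le> m" using so Cons by auto
  have m0: "m \<ge> 0" using nn Cons by auto
  have r2: "(\<Sum>l\<leftarrow>rest. l^2) \<ge> 0" by (rule sum_list_nonneg) auto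
  have r3: "(\<Sum>l\<leftarrow>rest. l^3) \<ge> 0" using nn Cons by (intro sum_list_nonneg) auto
  have "(\<Sum>l\<leftarrow>ls. l^3) \<le> (\<Sum>l\<leftarrow>ls. m * l^2)"
  proof (rule sum_list_mono)
    fix l assume l: "l \<in> set ls"
    have "l * l^2 \<le> m * l^2" using le l by (intro mult_right_mono) auto
    then show "l^3 \<le> m * l^2" by (simp add: power2_eq_square power3_eq_cube)
  qed
  also have "\<dots> = m * (\<Sum>l\<leftarrow>ls. l^2)" by (simp add: sum_list_const_mult)
  finally have s3: "(\<Sum>l\<leftarrow>ls. l^3) \<le> m * (\<Sum>l\<leftarrow>ls. l^2)" .
  have mpos: "m > 0"
  proof (rule ccontr)
    assume "\<not> m > 0" then have "m = 0" using m0 by simp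
    have "(\<Sum>l\<leftarrow>ls. l^2) \<le> (\<Sum>l\<leftarrow>ls. m * l)"
    proof (rule sum_list_mono)
      fix l assume l: "l \<in> set ls"
      show "l^2 \<le> m * l" using le l nn by (auto simp: power2_eq_square intro: mult_right_mono)
    qed
    also have "\<dots> = 0" using \<open>m = 0\<close> by simp
    finally show False using S by simp
  qed
  show ?thesis using Cons mpos s3 r2 r3 by auto
qed

lemma fP_bounds:
  fixes P V :: "real mat"
  assumes P: "P \<in> carrier_mat N N" and sP: "transpose_mat P = P" and PP: "P * P = P"
    and P0: "P \<noteq> 0\<^sub>m N N" and V: "pos_def_mat N V"
  shows "0 < beta1 (P*V*P) \<and> beta1 (P*V*P) \<le> 1 \<and> 1 / (beta1 (P*V*P))^2 \<le> f_P P V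
     \<and> f_P P V \<le> 1 / (beta1 (P*V*P))^6"
proof -
  have Vc: "V \<in> carrier_mat N N" and sV: "transpose_mat V = V"
    using V unfolding pos_def_mat_def sym_mat_def by auto
  define A where "A = P*V*P"
  have Ac: "A \<in> carrier_mat N N" unfolding A_def using P Vc by auto
  have "transpose_mat A = transpose_mat P * transpose_mat (P * V)"
    unfolding A_def by (rule transpose_mult[of _ N N]) (use P Vc in auto)
  also have "transpose_mat (P * V) = transpose_mat V * transpose_mat P"
    by (rule transpose_mult[of _ N N]) (use P Vc in auto)
  finally have sA: "transpose_mat A = A" unfolding A_def sP sV using P Vc by simp
  have psd: "v \<bullet> (A *\<^sub>v v) \<ge> 0" if v: "v \<in> carrier_vec N" for v
    unfolding A_def qf_PVP[OF P sP Vc v] using P v by (intro pd_psd[OF V]) auto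
  have A0: "A \<noteq> 0\<^sub>m N N" unfolding A_def by (rule PVP_nonzero[OF P sP V P0])
  define ls where "ls = eigs_desc A"
  from eigs_desc_spec[OF Ac sA] have so: "sorted_wrt (\<ge>) ls" and ch: "char_poly A = (\<Prod>l\<leftarrow>ls. [:-l,1:])"
    unfolding ls_def by auto
  have nn: "\<forall>l\<in>set ls. l \<ge> 0" using eig_nonneg[OF Ac psd ch] by blast
  from trace_pow_eigs[OF Ac ch] have t2: "mat_trace (A*A) = (\<Sum>l\<leftarrow>ls. l^2)"
    and t3: "mat_trace (A*A*A) = (\<Sum>l\<leftarrow>ls. l^3)" by auto
  define S2 where "S2 = (\<Sum>l\<leftarrow>ls. l^2)"
  define S3 where "S3 = (\<Sum>l\<leftarrow>ls. l^3)"
  define m where "m = hd ls"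
  have S2p: "S2 > 0" unfolding S2_def t2[symmetric] by (rule trace_sq_pos[OF Ac sA A0])
  have fP: "f_P P V = S2^3 / S3^2" unfolding f_P_def S2_def S3_def t2[symmetric] t3[symmetric] A_def
    using trace_sandwich[OF P Vc PP] by simp
  have b: "beta1 A = m / sqrt S2" unfolding beta1_def m_def S2_def ls_def by simp
  from list_bounds[OF so nn S2p[unfolded S2_def]] have mp: "m > 0" and m2: "m^2 \<le> S2"
    and s3: "S3 \<le> m * S2" and m3: "m^3 \<le> S3" unfolding m_def S2_def S3_def by auto
  have S3p: "S3 > 0" using m3 mp by (meson less_le_trans zero_less_power)
  have sq: "sqrt S2 > 0" using S2p by simp
  have bp: "m / sqrt S2 > 0" using mp sq by simp
  have "m \<le> sqrt S2" using m2 mp by (meson real_le_rsqrt)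
  then have b1: "m / sqrt S2 \<le> 1" using sq by simp
  have b2: "(m / sqrt S2)^2 = m^2 / S2" using S2p by (simp add: power_divide)
  have b6: "(m / sqrt S2)^6 = m^6 / S2^3"
  proof -
    have "(m / sqrt S2)^6 = ((m / sqrt S2)^2)^3" by (simp flip: power_mult)
    also have "\<dots> = m^6 / S2^3" unfolding b2 by (simp add: power_divide flip: power_mult)
    finally show ?thesis .
  qed
  have lo: "S2 / m^2 \<le> S2^3 / S3^2"
  proof -
    have "S3^2 \<le> (m*S2)^2" using s3 S3p by (intro power_mono) auto
    then have "S3^2 * S2 \<le> m^2 * S2^2 * S2" using S2p by (simp add: power_mult_distrib)
    then have "S2 * S3^2 \<le> S2^3 * m^2" by (simp add: power3_eq_cube power2_eq_square mult_ac)
    then show ?thesis using mp S3p by (simp add: divide_simps)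
  qed
  have hi: "S2^3 / S3^2 \<le> S2^3 / m^6"
  proof -
    have "(m^3)^2 \<le> S3^2" using m3 mp by (intro power_mono) auto
    then have "m^6 \<le> S3^2" by (simp flip: power_mult)
    then show ?thesis using mp S2p S3p by (intro divide_left_mono) auto
  qed
  have i2: "1 / (m / sqrt S2)^2 = S2 / m^2" unfolding b2 by simp
  have i6: "1 / (m / sqrt S2)^6 = S2^3 / m^6" unfolding b6 by simp
  show ?thesis unfolding A_def[symmetric] b fP i2 i6 using bp b1 lo hi by simp
qed


lemma chi_meas[measurable]: "chi_sq_density f \<in> borel_measurable borel"
  unfolding chi_sq_density_def by measurable

lemma chi_nonneg: "f > 0 \<Longrightarrow> chi_sq_density f x \<ge> 0"
  unfolding chi_sq_density_def using Gamma_real_pos[of "f/2"] by auto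

lemma chi_scaled: assumes f: "f > 0"
  shows "chi_sq_density f (0 + 2 * x) = indicator {0..} x * x powr (f/2 - 1) / exp x / (2 * Gamma (f/2))"
proof (cases "x > 0")
  case True
  define a where "a = f/2 - 1"
  have fa: "f/2 = a + 1" unfolding a_def by simp
  have G: "Gamma (a+1) > 0" using f fa by (metis Gamma_real_pos half_gt_zero)
  have p: "(2*x) powr a = 2 powr a * x powr a" using True by (simp add: powr_mult)
  have q: "2 powr (a+1) = 2 powr a * 2" by (simp add: powr_add)
  have q0: "2 powr a > 0" by simp
  have "chi_sq_density f (0 + 2 * x) = (2*x) powr a * exp (- (2*x) / 2) / (2 powr (a+1) * Gamma (a+1))"
    unfolding chi_sq_density_def using True by (simp add: a_def fa[symmetric])
  also have "\<dots> = x powr a / exp x / (2 * Gamma (a+1))"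
    unfolding p q using G q0 True by (simp add: exp_minus field_simps)
  finally show ?thesis using True by (simp add: a_def fa[symmetric])
next
  case False
  then show ?thesis by (cases "x = 0") (auto simp: chi_sq_density_def)
qed

lemma chi_nn_integral: assumes f: "f > 0"
  shows "(\<integral>\<^sup>+x. ennreal (chi_sq_density f x) \<partial>lborel) = 1"
proof -
  have G: "Gamma (f/2) > 0" using f by (intro Gamma_real_pos) simp
  have "(\<integral>\<^sup>+x. ennreal (chi_sq_density f x) \<partial>lborel)
      = ennreal \<bar>2\<bar> * (\<integral>\<^sup>+x. ennreal (chi_sq_density f (0 + 2 * x)) \<partial>lborel)"
    by (rule nn_integral_real_affine) auto
  also have "(\<integral>\<^sup>+x. ennreal (chi_sq_density f (0 + 2 * x)) \<partial>lborel)
      = (\<integral>\<^sup>+x. ennreal (1 / (2 * Gamma (f/2))) * ennreal (indicator {0..} x * x powr (f/2 - 1) / exp x) \<partial>lborel)"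
    unfolding chi_scaled[OF f] using G
    by (intro nn_integral_cong) (simp add: ennreal_mult'[symmetric] divide_simps)
  also have "\<dots> = ennreal (1 / (2 * Gamma (f/2))) * (\<integral>\<^sup>+x. ennreal (indicator {0..} x * x powr (f/2 - 1) / exp x) \<partial>lborel)"
    by (rule nn_integral_cmult) measurable
  also have "(\<integral>\<^sup>+x. ennreal (indicator {0..} x * x powr (f/2 - 1) / exp x) \<partial>lborel) = ennreal (Gamma (f/2))"
    using Gamma_conv_nn_integral_real[of "f/2"] f by simp
  finally have eq: "(\<integral>\<^sup>+x. ennreal (chi_sq_density f x) \<partial>lborel) = ennreal \<bar>2\<bar> * (ennreal (1 / (2 * Gamma (f/2))) * ennreal (Gamma (f/2)))" .
  have e1: "ennreal (1 / (2 * Gamma (f/2))) * ennreal (Gamma (f/2)) = ennreal (1 / (2 * Gamma (f/2)) * Gamma (f/2))"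
    by (rule ennreal_mult[symmetric]) (use G in auto)
  have e2: "1 / (2 * Gamma (f/2)) * Gamma (f/2) = 1/2" using G by simp
  have e3: "ennreal \<bar>2\<bar> * ennreal (1/2) = ennreal (\<bar>2\<bar> * (1/2))" by (rule ennreal_mult[symmetric]) auto
  show ?thesis unfolding eq e1 e2 e3 by simp
qed

lemma chi_integrable: "f > 0 \<Longrightarrow> integrable lborel (chi_sq_density f)"
  by (intro integrableI_nonneg) (auto simp: chi_nonneg chi_nn_integral)

lemma chi_integral: "f > 0 \<Longrightarrow> (\<integral>x. chi_sq_density f x \<partial>lborel) = 1"
  using nn_integral_eq_integral[OF chi_integrable, of f] chi_nn_integral[of f] chi_nonneg[of f] by simp

lemma integrable_ind: "integrable lborel (g::real\<Rightarrow>real) \<Longrightarrow> A \<in> sets borel \<Longrightarrow> integrable lborel (\<lambda>t. indicator A t * g t)"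
  using integrable_mult_indicator[of A lborel g] by simp

lemma cdf_K: assumes f: "f > 0"
  shows "cdf (K_law f) x = (\<integral>t. indicator {..f + x * sqrt (2*f)} t * chi_sq_density f t \<partial>lborel)"
proof -
  have s: "sqrt (2*f) > 0" using f by simp
  have pre: "(\<lambda>t. (t - f) / sqrt (2 * f)) -` {..x} = {..f + x * sqrt (2*f)}"
    using s by (auto simp: pos_divide_le_eq algebra_simps)
  have "cdf (K_law f) x = measure (chi_sq_law f) {..f + x * sqrt (2*f)}"
    unfolding cdf_def K_law_def by (subst measure_distr) (auto simp: chi_sq_law_def pre)
  also have "\<dots> = enn2real (\<integral>\<^sup>+t. ennreal (indicator {..f + x * sqrt (2*f)} t * chi_sq_density f t) \<partial>lborel)"
    unfolding chi_sq_law_def measure_def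
    by (subst emeasure_density) (auto intro!: arg_cong[where f=enn2real] nn_integral_cong simp: indicator_def)
  also have "(\<integral>\<^sup>+t. ennreal (indicator {..f + x * sqrt (2*f)} t * chi_sq_density f t) \<partial>lborel)
      = ennreal (\<integral>t. indicator {..f + x * sqrt (2*f)} t * chi_sq_density f t \<partial>lborel)"
    using chi_integrable[OF f] chi_nonneg[OF f]
    by (intro nn_integral_eq_integral) (auto intro!: integrable_ind)
  finally show ?thesis using chi_nonneg[OF f] by (simp add: integral_nonneg)
qed


lemma gamma_lb: "\<exists>\<gamma>>0. \<forall>s\<in>{1/4..3/4::real}. Gamma s \<ge> \<gamma>"
proof -
  have c: "continuous_on {1/4..3/4::real} Gamma"
    by (rule continuous_on_Gamma) (auto dest: nonpos_Ints_nonpos)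
  obtain s0 where s0: "s0 \<in> {1/4..3/4}" "\<forall>s\<in>{1/4..3/4::real}. Gamma s0 \<le> Gamma s"
    using continuous_attains_inf[OF compact_Icc _ c] by auto
  have "Gamma s0 > 0" using s0(1) by (intro Gamma_real_pos) auto
  with s0 show ?thesis by blast
qed

lemma isCont_Gamma_half: "isCont Gamma (1/2::real)"
proof -
  have "continuous_on {0::real<..} Gamma"
    by (rule continuous_on_Gamma) (auto dest: nonpos_Ints_nonpos)
  then show ?thesis by (subst (asm) continuous_on_eq_continuous_at) auto
qed

lemma chi_cont: assumes F: "F \<longlonglongrightarrow> 1"
  shows "(\<lambda>k. chi_sq_density (F k) t) \<longlonglongrightarrow> chi_sq_density 1 t"
proof (cases "t > 0")
  case True
  have G: "(\<lambda>k. Gamma (F k / 2)) \<longlonglongrightarrow> Gamma (1/2)"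
    by (rule isCont_tendsto_compose[OF isCont_Gamma_half]) (use F in \<open>auto intro!: tendsto_eq_intros\<close>)
  have h0: "0 < Gamma (1/2::real)" by (rule Gamma_real_pos) simp
  have G0: "Gamma (1/2::real) \<noteq> 0" by (metis h0 less_irrefl)
  have "(\<lambda>k. t powr (F k / 2 - 1) * exp (- t / 2) / (2 powr (F k / 2) * Gamma (F k / 2)))
      \<longlonglongrightarrow> t powr (1 / 2 - 1) * exp (- t / 2) / (2 powr (1 / 2) * Gamma (1 / 2))"
    using True G0 by (intro tendsto_intros F G) auto
  then show ?thesis using True unfolding chi_sq_density_def by simp
next
  case False
  then show ?thesis unfolding chi_sq_density_def by simp
qed

definition Wdom :: "real \<Rightarrow> real \<Rightarrow> real" where
  "Wdom \<gamma> t = (1/\<gamma>) * (2 powr (1/4) * Gamma (1/4) * chi_sq_density (1/2) t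
      + 2 powr (3/4) * Gamma (3/4) * chi_sq_density (3/2) t)"

lemma Wdom_integrable: "integrable lborel (Wdom \<gamma>)"
proof -
  have a: "integrable lborel (\<lambda>t. 2 powr (1/4) * Gamma (1/4) * chi_sq_density (1/2) t)"
    by (rule integrable_mult_right) (rule chi_integrable, simp)
  have b: "integrable lborel (\<lambda>t. 2 powr (3/4) * Gamma (3/4) * chi_sq_density (3/2) t)"
    by (rule integrable_mult_right) (rule chi_integrable, simp)
  show ?thesis unfolding Wdom_def by (rule integrable_mult_right) (rule Bochner_Integration.integrable_add[OF a b])
qed

lemma chi_dom:
  assumes \<gamma>: "\<gamma> > 0" "\<forall>s\<in>{1/4..3/4::real}. Gamma s \<ge> \<gamma>" and f: "1/2 \<le> f" "f \<le> 3/2"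
  shows "chi_sq_density f t \<le> Wdom \<gamma> t"
proof (cases "t > 0")
  case False
  then show ?thesis unfolding Wdom_def chi_sq_density_def by simp
next
  case True
  have G14: "Gamma (1/4::real) > 0" "Gamma (3/4::real) > 0" by (auto intro!: Gamma_real_pos)
  have G14': "Gamma (1/4::real) \<noteq> 0" "Gamma (3/4::real) \<noteq> 0"
    by (metis G14(1) less_irrefl, metis G14(2) less_irrefl)
  have w1: "2 powr (1/4) * Gamma (1/4) * chi_sq_density (1/2) t = t powr (-3/4) * exp (- t / 2)"
    unfolding chi_sq_density_def using True G14' by simp
  have w2: "2 powr (3/4) * Gamma (3/4) * chi_sq_density (3/2) t = t powr (-1/4) * exp (- t / 2)"
    unfolding chi_sq_density_def using True G14' by simp
  have W: "Wdom \<gamma> t = (1/\<gamma>) * ((t powr (-3/4) + t powr (-1/4)) * exp (- t / 2))"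
    unfolding Wdom_def w1 w2 by (simp add: algebra_simps)
  have Gf: "Gamma (f/2) \<ge> \<gamma>" using \<gamma>(2) f by auto
  have p2: "2 powr (f/2) \<ge> 1" using f by (intro ge_one_powr_ge_zero) auto
  have den: "2 powr (f/2) * Gamma (f/2) \<ge> \<gamma>"
    using mult_mono[OF p2 Gf] \<gamma> by simp
  have tp: "t powr (f/2 - 1) \<le> t powr (-3/4) + t powr (-1/4)"
  proof (cases "t \<le> 1")
    case True
    have "t powr (f/2 - 1) \<le> t powr (-3/4)" using True \<open>t>0\<close> f by (intro powr_mono') auto
    then show ?thesis by (smt (verit) powr_ge_zero)
  next
    case False
    have "t powr (f/2 - 1) \<le> t powr (-1/4)" using False f by (intro powr_mono) auto
    then show ?thesis by (smt (verit) powr_ge_zero)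
  qed
  have "chi_sq_density f t = t powr (f/2 - 1) * exp (- t / 2) / (2 powr (f/2) * Gamma (f/2))"
    unfolding chi_sq_density_def using True by simp
  also have "\<dots> \<le> (t powr (-3/4) + t powr (-1/4)) * exp (- t / 2) / \<gamma>"
    using tp den \<gamma>(1) by (intro frac_le mult_right_mono) auto
  also have "\<dots> = Wdom \<gamma> t" unfolding W by simp
  finally show ?thesis .
qed

lemma cdf_K_cont:
  assumes F: "F \<longlonglongrightarrow> 1" and Fp: "\<And>k. F k > 0"
  shows "(\<lambda>k. cdf (K_law (F k)) x) \<longlonglongrightarrow> cdf (K_law 1) x"
proof -
  obtain \<gamma> where \<gamma>: "\<gamma> > 0" "\<forall>s\<in>{1/4..3/4::real}. Gamma s \<ge> \<gamma>" using gamma_lb by blast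
  define c where "c k = F k + x * sqrt (2 * F k)" for k
  define c0 where "c0 = 1 + x * sqrt (2 * 1)"
  have cl: "c \<longlonglongrightarrow> c0" unfolding c_def c0_def by (intro tendsto_intros F)
  have "eventually (\<lambda>k. dist (F k) 1 < 1/2) sequentially" using F by (rule tendstoD) simp
  then obtain K0 where K0: "\<And>k. k \<ge> K0 \<Longrightarrow> dist (F k) 1 < 1/2" unfolding eventually_sequentially by blast
  have Fr: "1/2 \<le> F (i + K0)" "F (i + K0) \<le> 3/2" for i
  proof -
    have h: "\<bar>F (i+K0) - 1\<bar> < 1/2" using K0[of "i+K0"] by (simp add: dist_real_def)
    show "1/2 \<le> F (i + K0)" "F (i + K0) \<le> 3/2" using abs_less_iff[THEN iffD1, OF h] by linarith+
  qed
  have F': "(\<lambda>i. F (i + K0)) \<longlonglongrightarrow> 1" using F by (rule LIMSEQ_ignore_initial_segment)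
  have c': "(\<lambda>i. c (i + K0)) \<longlonglongrightarrow> c0" using cl by (rule LIMSEQ_ignore_initial_segment)
  have "(\<lambda>i. \<integral>t. indicator {..c (i+K0)} t * chi_sq_density (F (i+K0)) t \<partial>lborel)
      \<longlonglongrightarrow> (\<integral>t. indicator {..c0} t * chi_sq_density 1 t \<partial>lborel)"
  proof (rule integral_dominated_convergence[where w = "Wdom \<gamma>"])
    show "integrable lborel (Wdom \<gamma>)" by (rule Wdom_integrable)
    show "AE t in lborel. (\<lambda>i. indicator {..c (i+K0)} t * chi_sq_density (F (i+K0)) t)
        \<longlonglongrightarrow> indicator {..c0} t * chi_sq_density 1 t"
      using AE_lborel_singleton[of c0]
    proof eventually_elim
      case (elim t)
      have ind: "(\<lambda>i. indicator {..c (i+K0)} t :: real) \<longlonglongrightarrow> indicator {..c0} t"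
      proof (cases "t < c0")
        case True
        have "eventually (\<lambda>i. t < c (i+K0)) sequentially" by (rule order_tendstoD(1)[OF c' True])
        then have "eventually (\<lambda>i. indicator {..c (i+K0)} t = (indicator {..c0} t :: real)) sequentially"
          by eventually_elim (use True in auto)
        then show ?thesis by (rule tendsto_eventually[OF eventually_mono]) auto
      next
        case False
        then have "t > c0" using elim by auto
        then have "eventually (\<lambda>i. t > c (i+K0)) sequentially" by (rule order_tendstoD(2)[OF c'])
        then have "eventually (\<lambda>i. indicator {..c (i+K0)} t = (indicator {..c0} t :: real)) sequentially"
          by eventually_elim (use \<open>t > c0\<close> in auto)
        then show ?thesis by (rule tendsto_eventually[OF eventually_mono]) auto
      qed
      show ?case by (intro tendsto_mult ind chi_cont F')
    qed
    show "AE t in lborel. norm (indicator {..c (i+K0)} t * chi_sq_density (F (i+K0)) t) \<le> Wdom \<gamma> t" for i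
    proof (intro AE_I2)
      fix t
      have "norm (indicator {..c (i+K0)} t * chi_sq_density (F (i+K0)) t) \<le> chi_sq_density (F (i+K0)) t"
        using chi_nonneg[of "F (i+K0)" t] Fp[of "i+K0"] by (auto simp: indicator_def)
      also have "\<dots> \<le> Wdom \<gamma> t" by (rule chi_dom[OF \<gamma> Fr])
      finally show "norm (indicator {..c (i+K0)} t * chi_sq_density (F (i+K0)) t) \<le> Wdom \<gamma> t" .
    qed
  qed measurable
  then have "(\<lambda>i. cdf (K_law (F (i + K0))) x) \<longlonglongrightarrow> cdf (K_law 1) x"
    using Fp by (simp add: cdf_K c_def c0_def)
  then show ?thesis by (rule LIMSEQ_offset)
qed


lemma ln_ub1: assumes x: "x \<ge> (1::real)" shows "ln x \<le> (x - 1/x)/2"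
proof -
  have "(\<lambda>z. (z - 1/z)/2 - ln z) 1 \<le> (\<lambda>z. (z - 1/z)/2 - ln z) x"
  proof (rule DERIV_nonneg_imp_increasing_open[OF x])
    fix z :: real assume z: "1 < z" "z < x"
    have "((\<lambda>z. (z - 1/z)/2 - ln z) has_real_derivative ((1 + 1/(z*z))/2 - 1/z)) (at z)"
      using z by (auto intro!: derivative_eq_intros simp: field_simps power2_eq_square)
    moreover have "(1 + 1/(z*z))/2 - 1/z = (z-1)^2/(2*z*z)" using z by (simp add: field_simps power2_eq_square)
    moreover have "(z-1)^2/(2*z*z) \<ge> 0" using z by simp
    ultimately show "\<exists>y. ((\<lambda>z. (z - 1/z)/2 - ln z) has_real_derivative y) (at z) \<and> 0 \<le> y" by metis
  next
    show "continuous_on {1..x} (\<lambda>z. (z - 1/z)/2 - ln z)"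
      by (intro continuous_intros) auto
  qed
  then show ?thesis by simp
qed

lemma ln_ub2: assumes x: "0 < x" "x \<le> (1::real)" shows "ln x \<le> (x - 1) - (x - 1)^2/2"
proof -
  have "(\<lambda>z. ln z - (z - 1) + (z-1)^2/2) x \<le> (\<lambda>z. ln z - (z - 1) + (z-1)^2/2) 1"
  proof (rule DERIV_nonneg_imp_increasing_open[OF x(2)])
    fix z :: real assume z: "x < z" "z < 1"
    have "((\<lambda>z. ln z - (z - 1) + (z-1)^2/2) has_real_derivative (1/z - 1 + (z - 1))) (at z)"
      using z x by (auto intro!: derivative_eq_intros simp: field_simps power2_eq_square)
    moreover have "1/z - 1 + (z - 1) = (z-1)^2/z" using z x by (simp add: field_simps power2_eq_square)
    moreover have "(z-1)^2/z \<ge> 0" using z x by simp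
    ultimately show "\<exists>y. ((\<lambda>z. ln z - (z - 1) + (z-1)^2/2) has_real_derivative y) (at z) \<and> 0 \<le> y" by metis
  next
    show "continuous_on {x..1} (\<lambda>z. ln z - (z - 1) + (z-1)^2/2)"
      using x by (intro continuous_intros) auto
  qed
  then show ?thesis by simp
qed

lemma E_pos: assumes s: "s \<ge> (1::real)" and u: "u \<ge> 0"
  shows "(s^2 - 1) * ln (1 + u) - s^2 * u \<le> 2 - \<bar>s * u\<bar> / 4"
proof -
  have l0: "ln (1 + u) \<ge> 0" using u by simp
  have l1: "ln (1+u) \<le> ((1+u) - 1/(1+u))/2" using u by (intro ln_ub1) simp
  have "(s^2 - 1) * ln (1 + u) \<le> s^2 * ln (1+u)" using l0 by (simp add: algebra_simps)
  also have "\<dots> \<le> s^2 * (((1+u) - 1/(1+u))/2)" using l1 by (intro mult_left_mono) auto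
  finally have "(s^2 - 1) * ln (1 + u) - s^2 * u \<le> s^2 * (((1+u) - 1/(1+u))/2) - s^2 * u" by simp
  also have "s^2 * (((1+u) - 1/(1+u))/2) - s^2 * u = - ((s*u)^2 / (2*(1+u)))"
    using u by (simp add: field_simps power2_eq_square)
  finally have E: "(s^2 - 1) * ln (1 + u) - s^2 * u \<le> - ((s*u)^2 / (2*(1+u)))" .
  define y where "y = s * u"
  have y0: "y \<ge> 0" unfolding y_def using s u by simp
  have uy: "u \<le> y" unfolding y_def using s u by (simp add: mult_le_cancel_right1)
  have "y/4 - 2 \<le> y^2 / (2*(1+u))"
  proof (cases "y \<le> 8")
    case True
    have "0 \<le> y^2 / (2*(1+u))" using u by simp
    moreover have "y/4 - 2 \<le> 0" using True by simp
    ultimately show ?thesis by linarith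
  next
    case False
    have "y/4 \<le> y^2/(2*(1+y))" using False by (simp add: field_simps power2_eq_square)
    also have "\<dots> \<le> y^2/(2*(1+u))" using uy u by (intro divide_left_mono) auto
    finally show ?thesis by linarith
  qed
  then show ?thesis using E y0 unfolding y_def by simp
qed

lemma E_neg: assumes s: "s^2 \<ge> (2::real)" and u: "-1 < u" "u < 0"
  shows "(s^2 - 1) * ln (1 + u) - s^2 * u \<le> 2 - \<bar>s * u\<bar> / 4"
proof -
  have l: "ln (1+u) \<le> u - u^2/2" using ln_ub2[of "1+u"] u by simp
  have "(s^2 - 1) * ln (1 + u) \<le> (s^2 - 1) * (u - u^2/2)" using l s by (intro mult_left_mono) auto
  then have E: "(s^2 - 1) * ln (1 + u) - s^2 * u \<le> - u - (s^2 - 1) * u^2/2" by (simp add: algebra_simps)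
  have "(s^2/2) * u^2 \<le> (s^2 - 1) * u^2" using s by (intro mult_right_mono) auto
  then have "(s*u)^2/4 \<le> (s^2 - 1) * u^2/2" by (simp add: power_mult_distrib)
  moreover have "1 - (s*u)^2/4 \<le> 2 - \<bar>s*u\<bar>/4"
  proof -
    have "0 \<le> (\<bar>s*u\<bar>/2 - 1/4)^2" by simp
    then have "0 \<le> \<bar>s*u\<bar>^2/4 - \<bar>s*u\<bar>/4 + 1/16" by (simp add: power2_eq_square field_simps)
    then show ?thesis by simp
  qed
  ultimately show ?thesis using E u by linarith
qed

definition hh :: "real \<Rightarrow> real \<Rightarrow> real" where
  "hh m y = (if 0 < 1 + y / sqrt m then (1 + y / sqrt m) powr (m - 1) * exp (- (sqrt m * y)) else 0)"

lemma hh_nonneg: "hh m y \<ge> 0" unfolding hh_def by simp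

lemma hh_meas[measurable]: "hh m \<in> borel_measurable borel"
  unfolding hh_def by measurable

lemma hh_bound: assumes m: "m \<ge> 2" shows "hh m y \<le> exp (2 - \<bar>y\<bar> / 4)"
proof (cases "0 < 1 + y / sqrt m")
  case False then show ?thesis unfolding hh_def by simp
next
  case True
  define s where "s = sqrt m"
  define u where "u = y / s"
  have s2: "s^2 = m" unfolding s_def using m by simp
  have s1: "s \<ge> 1" unfolding s_def using m by simp
  have y: "y = s * u" unfolding u_def using s1 by simp
  have u1: "0 < 1 + u" using True unfolding u_def s_def .
  have "hh m y = (1 + y / sqrt m) powr (m-1) * exp (- (sqrt m * y))" unfolding hh_def by (rule if_P[OF True])
  also have "\<dots> = (1+u) powr (m-1) * exp (- (s * y))" unfolding u_def s_def ..
  also have "(1+u) powr (m-1) = exp ((m-1) * ln (1+u))" using u1 by (simp add: powr_def)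
  also have "s * y = s^2 * u" using y by (simp add: power2_eq_square)
  also have "exp ((m-1) * ln (1+u)) * exp (- (s^2*u)) = exp ((m-1) * ln (1+u) - s^2*u)"
    by (subst exp_add[symmetric]) simp
  finally have eq: "hh m y = exp ((m-1) * ln (1+u) - s^2*u)" .
  have "(m - 1) * ln (1 + u) - s^2 * u \<le> 2 - \<bar>y\<bar>/4"
  proof (cases "u \<ge> 0")
    case True
    show ?thesis unfolding s2 using E_pos[OF s1 True, unfolded s2 y[symmetric]] .
  next
    case False
    have s2': "s^2 \<ge> 2" unfolding s2 by (rule m)
    have u2: "-1 < u" "u < 0" using u1 False by linarith+
    show ?thesis unfolding s2 using E_neg[OF s2' u2, unfolded s2 y[symmetric]] .
  qed
  then show ?thesis unfolding eq by simp
qed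


definition CC :: "real \<Rightarrow> real" where
  "CC m = 2 * sqrt m * (2*m) powr (m-1) * exp (-m) / (2 powr m * Gamma m)"

lemma aux_rearr: "(2::real)*r*(A*B*(E1*E2)/D) = 2*r*A*E1/D*(B*E2)"
  by (simp add: field_simps)

lemma chi_sub: assumes f: "f > 0"
  shows "sqrt (2*f) * chi_sq_density f (f + sqrt (2*f) * y) = CC (f/2) * hh (f/2) y"
proof -
  define m where "m = f/2"
  have m: "m > 0" and fm: "f = 2*m" using f unfolding m_def by auto
  define r where "r = sqrt m"
  have r: "r > 0" "r * r = m" unfolding r_def using m by auto
  have sq: "sqrt (2*f) = 2*r" unfolding fm r_def by (simp add: real_sqrt_mult)
  have t0: "f + sqrt (2*f) * y = f + 2*r*y" by (simp only: sq)
  have t1: "f + 2*r*y = 2*(r*r)*(1 + y/r)" using fm r by (simp add: field_simps)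
  have t: "f + sqrt (2*f) * y = 2*m*(1 + y/r)" using t0 t1 r(2) by simp
  show ?thesis
  proof (cases "0 < 1 + y/r")
    case True
    have tp: "2*m*(1 + y/r) > 0" using True m by simp
    have pw: "(2*m*(1 + y/r)) powr (m-1) = (2*m) powr (m-1) * (1 + y/r) powr (m-1)"
      using True m powr_mult[of "2*m" "1 + y/r" "m-1"] by simp
    have ex: "exp (- (2*m*(1 + y/r)) / 2) = exp (-m) * exp (- (r*y))"
    proof -
      have e: "- (2*m*(1 + y/r)) / 2 = -m + - (r*y)" using r by (simp add: field_simps)
      show ?thesis unfolding e by (rule exp_add)
    qed
    have "sqrt (2*f) * chi_sq_density f (f + sqrt (2*f) * y) = sqrt (2*f) * chi_sq_density f (2*m*(1 + y/r))"
      by (simp only: t)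
    also have "\<dots> = 2*r * chi_sq_density f (2*m*(1 + y/r))" by (simp only: sq)
    also have "chi_sq_density f (2*m*(1 + y/r)) = (2*m*(1 + y/r)) powr (m - 1) * exp (- (2*m*(1 + y/r)) / 2) / (2 powr m * Gamma m)"
      unfolding chi_sq_density_def m_def[symmetric] using tp by (rule if_P)
    also have "\<dots> = (2*m) powr (m-1) * (1 + y/r) powr (m-1) * (exp (-m) * exp (- (r*y))) / (2 powr m * Gamma m)"
      by (simp only: pw ex)
    finally have "sqrt (2*f) * chi_sq_density f (f + sqrt (2*f) * y)
        = 2*r * ((2*m) powr (m-1) * (1 + y/r) powr (m-1) * (exp (-m) * exp (- (r*y))) / (2 powr m * Gamma m))" .
    also have "\<dots> = CC m * hh m y"
    proof -
      have hh: "hh m y = (1 + y/r) powr (m-1) * exp (-(r*y))"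
        unfolding hh_def r_def[symmetric] using True by (rule if_P)
      have cc: "CC m = 2*r*(2*m) powr (m-1) * exp (-m) / (2 powr m * Gamma m)"
        unfolding CC_def r_def ..
      show ?thesis unfolding hh cc by (rule aux_rearr)
    qed
    finally show ?thesis unfolding m_def .
  next
    case False
    have "\<not> 0 < f + sqrt (2*f) * y" unfolding t using False m by (simp add: zero_less_mult_iff)
    then have c0: "chi_sq_density f (f + sqrt (2*f) * y) = 0" unfolding chi_sq_density_def by (rule if_not_P)
    have h0: "hh m y = 0" unfolding hh_def r_def[symmetric] using False by (rule if_not_P)
    show ?thesis unfolding m_def[symmetric] c0 h0 by simp
  qed
qed

lemma cdf_hh: assumes f: "f > 0"
  shows "cdf (K_law f) x = CC (f/2) * (\<integral>y. indicator {..x} y * hh (f/2) y \<partial>lborel)"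
    and "1 = CC (f/2) * (\<integral>y. hh (f/2) y \<partial>lborel)"
proof -
  define c where "c = sqrt (2*f)"
  have c: "c > 0" unfolding c_def using f by simp
  have key: "(\<integral>t. g t * chi_sq_density f t \<partial>lborel) = CC (f/2) * (\<integral>y. g (f + c * y) * hh (f/2) y \<partial>lborel)" for g
  proof -
    have "(\<integral>t. g t * chi_sq_density f t \<partial>lborel) = \<bar>c\<bar> *\<^sub>R (\<integral>y. g (f + c*y) * chi_sq_density f (f + c*y) \<partial>lborel)"
      by (rule lborel_integral_real_affine) (use c in auto)
    also have "\<dots> = (\<integral>y. c * (g (f + c*y) * chi_sq_density f (f + c*y)) \<partial>lborel)"
      using c by (simp add: integral_mult_right_zero)
    also have "\<dots> = (\<integral>y. CC (f/2) * (g (f + c*y) * hh (f/2) y) \<partial>lborel)"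
    proof (intro Bochner_Integration.integral_cong refl)
      fix y
      have cs: "c * chi_sq_density f (f + c*y) = CC (f/2) * hh (f/2) y"
        using chi_sub[OF f, of y] unfolding c_def .
      have "c * (g (f + c*y) * chi_sq_density f (f + c*y)) = g (f + c*y) * (c * chi_sq_density f (f + c*y))"
        by (simp only: mult.left_commute)
      also have "\<dots> = CC (f/2) * (g (f + c*y) * hh (f/2) y)" unfolding cs by (simp only: mult.left_commute)
      finally show "c * (g (f + c*y) * chi_sq_density f (f + c*y)) = CC (f/2) * (g (f + c*y) * hh (f/2) y)" .
    qed
    also have "\<dots> = CC (f/2) * (\<integral>y. g (f + c * y) * hh (f/2) y \<partial>lborel)" by (rule integral_mult_right_zero)
    finally show ?thesis .
  qed
  have ind: "indicator {..f + x * c} (f + c*y) = (indicator {..x} y :: real)" for y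
    using c by (simp add: indicator_def mult.commute)
  show "cdf (K_law f) x = CC (f/2) * (\<integral>y. indicator {..x} y * hh (f/2) y \<partial>lborel)"
    unfolding cdf_K[OF f] key c_def[symmetric] ind ..
  show "1 = CC (f/2) * (\<integral>y. hh (f/2) y \<partial>lborel)"
    using key[of "\<lambda>_. 1"] chi_integral[OF f] by simp
qed

lemma hh_lim: "((\<lambda>m. hh m y) \<longlongrightarrow> exp (- (y*y/2))) at_top"
proof -
  have L: "((\<lambda>m::real. (m-1)*ln(1+y/sqrt m) - sqrt m * y) \<longlongrightarrow> - (y*y/2)) at_top" by real_asymp
  have "((\<lambda>m::real. 1 + y/sqrt m) \<longlongrightarrow> 1) at_top" by real_asymp
  then have ev: "eventually (\<lambda>m. 0 < 1 + y / sqrt m) at_top" by (rule order_tendstoD) simp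
  have "eventually (\<lambda>m. exp ((m-1)*ln(1+y/sqrt m) - sqrt m * y) = hh m y) at_top"
    using ev
  proof eventually_elim
    case (elim m)
    have "exp ((m-1)*ln(1+y/sqrt m) - sqrt m * y) = exp ((m-1)*ln(1+y/sqrt m)) * exp (- (sqrt m * y))"
      by (simp add: exp_add[symmetric])
    then show ?case unfolding hh_def using elim by (simp add: powr_def)
  qed
  then show ?thesis using tendsto_exp[OF L] by (rule Lim_transform_eventually[rotated])
qed

definition wexp :: "real \<Rightarrow> real" where
  "wexp y = 4 * exp 2 * (exponential_density (1/4) y + exponential_density (1/4) (-y))"

lemma wexp_integrable: "integrable lborel wexp"
proof -
  have "prob_space (density lborel (exponential_density (1/4)))"
    by (rule prob_space_exponential_density) simp
  then have "emeasure (density lborel (exponential_density (1/4))) (space lborel) = 1"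
    by (metis prob_space.emeasure_space_1 space_density)
  then have nn: "(\<integral>\<^sup>+ x. ennreal (exponential_density (1/4) x) \<partial>lborel) = 1"
    by (subst (asm) emeasure_density) auto
  have i1: "integrable lborel (exponential_density (1/4))"
    by (rule integrableI_nonneg) (auto simp: nn)
  have i2: "integrable lborel (\<lambda>x. exponential_density (1/4) (0 + (-1) * x))"
    by (rule lborel_integrable_real_affine[OF i1]) simp
  show ?thesis unfolding wexp_def
    by (intro integrable_mult_right Bochner_Integration.integrable_add i1) (use i2 in simp)
qed

lemma hh_wexp: assumes m: "m \<ge> 2" shows "hh m y \<le> wexp y"
proof -
  have "hh m y \<le> exp (2 - \<bar>y\<bar>/4)" by (rule hh_bound[OF m])
  also have "exp (2 - \<bar>y\<bar>/4) \<le> wexp y"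
  proof (cases "y \<ge> 0")
    case True
    have e: "exp (2 - \<bar>y\<bar>/4) = exp 2 * exp (-(\<bar>y\<bar>/4))" by (simp add: exp_add[symmetric])
    have "exponential_density (1/4) y = (1/4) * exp (-(\<bar>y\<bar>/4))" using True by (simp add: exponential_density_def)
    then have "exp (2 - \<bar>y\<bar>/4) = 4 * exp 2 * exponential_density (1/4) y" unfolding e by simp
    moreover have "exponential_density (1/4) (-y) \<ge> 0" by (simp add: exponential_density_def)
    ultimately show ?thesis unfolding wexp_def by (simp add: algebra_simps)
  next
    case False
    have e: "exp (2 - \<bar>y\<bar>/4) = exp 2 * exp (-(\<bar>y\<bar>/4))" by (simp add: exp_add[symmetric])
    have "exponential_density (1/4) (-y) = (1/4) * exp (-(\<bar>y\<bar>/4))" using False by (simp add: exponential_density_def)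
    then have "exp (2 - \<bar>y\<bar>/4) = 4 * exp 2 * exponential_density (1/4) (-y)" unfolding e by simp
    moreover have "exponential_density (1/4) y \<ge> 0" by (simp add: exponential_density_def)
    ultimately show ?thesis unfolding wexp_def by (simp add: algebra_simps)
  qed
  finally show ?thesis .
qed

lemma cdf_std: "cdf std_normal_distribution x = (\<integral>y. indicator {..x} y * std_normal_density y \<partial>lborel)"
proof -
  have "cdf std_normal_distribution x = enn2real (\<integral>\<^sup>+t. ennreal (indicator {..x} t * std_normal_density t) \<partial>lborel)"
    unfolding cdf_def measure_def
    by (subst emeasure_density) (auto intro!: arg_cong[where f=enn2real] nn_integral_cong simp: indicator_def)
  also have "(\<integral>\<^sup>+t. ennreal (indicator {..x} t * std_normal_density t) \<partial>lborel)
      = ennreal (\<integral>t. indicator {..x} t * std_normal_density t \<partial>lborel)"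
    by (intro nn_integral_eq_integral) (auto intro!: integrable_ind)
  finally show ?thesis by (simp add: integral_nonneg)
qed

lemma cdf_K_normal:
  assumes F: "filterlim F at_top sequentially" and Fp: "\<And>k. F k > 0"
  shows "(\<lambda>k. cdf (K_law (F k)) x) \<longlonglongrightarrow> cdf std_normal_distribution x"
proof -
  define I0 where "I0 m = (\<integral>y. hh m y \<partial>lborel)" for m
  define I1 where "I1 m = (\<integral>y. indicator {..x} y * hh m y \<partial>lborel)" for m
  define g :: "real \<Rightarrow> real" where "g y = exp (- (y*y/2))" for y
  have ev2: "eventually (\<lambda>m::real. m \<ge> 2) at_top" by (rule eventually_ge_at_top)
  have L0: "(I0 \<longlongrightarrow> (\<integral>y. g y \<partial>lborel)) at_top" unfolding I0_def
  proof (rule integral_dominated_convergence_at_top[where w = wexp])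
    show "AE y in lborel. ((\<lambda>m. hh m y) \<longlongrightarrow> g y) at_top" unfolding g_def by (intro AE_I2 hh_lim)
    show "\<forall>\<^sub>F m in at_top. AE y in lborel. norm (hh m y) \<le> wexp y"
      using ev2 by eventually_elim (auto intro!: AE_I2 simp: hh_nonneg hh_wexp)
  qed (auto simp: g_def wexp_integrable)
  have L1: "(I1 \<longlongrightarrow> (\<integral>y. indicator {..x} y * g y \<partial>lborel)) at_top" unfolding I1_def
  proof (rule integral_dominated_convergence_at_top[where w = wexp])
    show "AE y in lborel. ((\<lambda>m. indicator {..x} y * hh m y) \<longlongrightarrow> indicator {..x} y * g y) at_top"
      unfolding g_def by (intro AE_I2 tendsto_mult_left hh_lim)
    show "\<forall>\<^sub>F m in at_top. AE y in lborel. norm (indicator {..x} y * hh m y) \<le> wexp y"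
      using ev2 
    proof eventually_elim
      case (elim m)
      show ?case
      proof (intro AE_I2)
        fix y
        have "norm (indicator {..x} y * hh m y) \<le> hh m y" using hh_nonneg[of m y] by (auto simp: indicator_def)
        also have "\<dots> \<le> wexp y" by (rule hh_wexp[OF elim])
        finally show "norm (indicator {..x} y * hh m y) \<le> wexp y" .
      qed
    qed
  qed (auto simp: g_def wexp_integrable)
  have gstd: "g y = sqrt (2*pi) * std_normal_density y" for y
    unfolding g_def std_normal_density_def by (simp add: power2_eq_square)
  have J0: "(\<integral>y. g y \<partial>lborel) = sqrt (2*pi)"
    unfolding gstd using integral_normal_density[of 0 1] by simp
  have J1: "(\<integral>y. indicator {..x} y * g y \<partial>lborel) = sqrt (2*pi) * cdf std_normal_distribution x"
  proof -
    have "(\<integral>y. indicator {..x} y * g y \<partial>lborel) = (\<integral>y. sqrt (2*pi) * (indicator {..x} y * std_normal_density y) \<partial>lborel)"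
      by (intro Bochner_Integration.integral_cong) (auto simp: gstd)
    also have "\<dots> = sqrt (2*pi) * (\<integral>y. indicator {..x} y * std_normal_density y \<partial>lborel)"
      by (rule integral_mult_right_zero)
    finally show ?thesis unfolding cdf_std .
  qed
  have ratio: "((\<lambda>m. I1 m / I0 m) \<longlongrightarrow> cdf std_normal_distribution x) at_top"
    using tendsto_divide[OF L1 L0] unfolding J0 J1 by simp
  have G: "filterlim (\<lambda>k. F k / 2) at_top sequentially"
    using filterlim_at_top_mult_tendsto_pos[OF tendsto_const[of "1/2::real"] _ F] by simp
  have lim: "(\<lambda>k. I1 (F k / 2) / I0 (F k / 2)) \<longlonglongrightarrow> cdf std_normal_distribution x"
    using filterlim_compose[OF ratio G] by (simp add: o_def)
  have eq: "cdf (K_law (F k)) x = I1 (F k / 2) / I0 (F k / 2)" for k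
  proof -
    have a: "cdf (K_law (F k)) x = CC (F k / 2) * I1 (F k / 2)" unfolding I1_def by (rule cdf_hh(1)[OF Fp])
    have b: "1 = CC (F k / 2) * I0 (F k / 2)" unfolding I0_def by (rule cdf_hh(2)[OF Fp])
    then have "I0 (F k / 2) \<noteq> 0" by auto
    with a b show ?thesis by (simp add: field_simps)
  qed
  show ?thesis unfolding eq by (rule lim)
qed

theorem theorem4p1:
  fixes a d :: "nat \<Rightarrow> nat" and n :: "nat \<Rightarrow> nat \<Rightarrow> nat" and \<rho> :: "nat \<Rightarrow> real"
    and Sig :: "nat \<Rightarrow> nat \<Rightarrow> real mat" and mu :: "nat \<Rightarrow> nat \<Rightarrow> real vec"
    and TW TS :: "nat \<Rightarrow> real mat"
  assumes a_pos: "\<And>k. a k \<ge> 1" and d_pos: "\<And>k. d k \<ge> 1"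
    and n_pos: "\<And>k i. i < a k \<Longrightarrow> n k i \<ge> 1"
    and Sig: "\<And>k i. i < a k \<Longrightarrow> pos_def_mat (d k) (Sig k i)"
    and mu: "\<And>k i. i < a k \<Longrightarrow> mu k i \<in> carrier_vec (d k)"
    and TW: "\<And>k. sym_idempotent (a k) (TW k)"
    and TS: "\<And>k. sym_idempotent (d k) (TS k)"
    and T_nonzero: "\<And>k. kron (TW k) (TS k) \<noteq> 0\<^sub>m (a k * d k) (a k * d k)"
    and H0: "\<And>k. kron (TW k) (TS k) *\<^sub>v stack_vec (a k) (d k) (mu k) = 0\<^sub>v (a k * d k)"
    and N_lim: "filterlim (\<lambda>k. \<Sum>i<a k. n k i) at_top sequentially"
    and rho: "\<And>i. (\<forall>\<^sub>F k in sequentially. i < a k) \<Longrightarrow>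
               ((\<lambda>k. real (n k i) / real (\<Sum>j<a k. n k j)) \<longlonglongrightarrow> \<rho> i) \<and> 0 < \<rho> i \<and> \<rho> i < 1"
    and frameworks:
      "((\<exists>a0. \<forall>k. a k = a0) \<and> filterlim d at_top sequentially
           \<and> filterlim (\<lambda>k. Min (n k ` {..<a k})) at_top sequentially)
     \<or> ((\<exists>d0. \<forall>k. d k = d0) \<and> filterlim a at_top sequentially
           \<and> filterlim (\<lambda>k. Min (n k ` {..<a k})) at_top sequentially)
     \<or> (filterlim a at_top sequentially \<and> filterlim d at_top sequentially
           \<and> filterlim (\<lambda>k. Min (n k ` {..<a k})) at_top sequentially)"
  shows "((\<lambda>k. beta1 (kron (TW k) (TS k) * V_mat (a k) (n k) (Sig k) * kron (TW k) (TS k)))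
              \<longlonglongrightarrow> 0
          \<longrightarrow> weak_conv_m (\<lambda>k. K_law (f_P (kron (TW k) (TS k)) (V_mat (a k) (n k) (Sig k))))
                std_normal_distribution)
       \<and> ((\<lambda>k. beta1 (kron (TW k) (TS k) * V_mat (a k) (n k) (Sig k) * kron (TW k) (TS k)))
              \<longlonglongrightarrow> 1
          \<longrightarrow> weak_conv_m (\<lambda>k. K_law (f_P (kron (TW k) (TS k)) (V_mat (a k) (n k) (Sig k))))
                (distr (chi_sq_law 1) borel (\<lambda>x. (x - 1) / sqrt 2)))"
  proof -
  define P where "P k = kron (TW k) (TS k)" for k
  define V where "V k = V_mat (a k) (n k) (Sig k)" for k
  define \<beta> where "\<beta> k = beta1 (P k * V k * P k)" for k
  define fk where "fk k = f_P (P k) (V k)" for k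
  have bnd: "0 < \<beta> k \<and> \<beta> k \<le> 1 \<and> 1 / (\<beta> k)^2 \<le> fk k \<and> fk k \<le> 1 / (\<beta> k)^6" for k
  proof -
    from TW[of k] have TWc: "TW k \<in> carrier_mat (a k) (a k)" and sTW: "transpose_mat (TW k) = TW k"
      and iTW: "TW k * TW k = TW k" unfolding sym_idempotent_def sym_mat_def by auto
    from TS[of k] have TSc: "TS k \<in> carrier_mat (d k) (d k)" and sTS: "transpose_mat (TS k) = TS k"
      and iTS: "TS k * TS k = TS k" unfolding sym_idempotent_def sym_mat_def by auto
    have Pc: "P k \<in> carrier_mat (a k * d k) (a k * d k)" unfolding P_def by (rule kron_carrier[OF TWc TSc])
    have sP: "transpose_mat (P k) = P k" unfolding P_def by (rule kron_sym[OF TWc TSc sTW sTS])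
    have iP: "P k * P k = P k" unfolding P_def by (rule kron_idem[OF TWc TSc iTW iTS])
    have P0: "P k \<noteq> 0\<^sub>m (a k * d k) (a k * d k)" unfolding P_def by (rule T_nonzero)
    have Vp: "pos_def_mat (a k * d k) (V k)" unfolding V_def by (rule V_pd[OF Sig n_pos])
    show ?thesis unfolding \<beta>_def fk_def by (rule fP_bounds[OF Pc sP iP P0 Vp])
  qed
  have fpos: "fk k > 0" for k
  proof -
    have "0 < 1 / (\<beta> k)^2" using bnd[of k] by simp
    then show ?thesis using bnd[of k] by linarith
  qed
  have A: "\<beta> \<longlonglongrightarrow> 0 \<longrightarrow> weak_conv_m (\<lambda>k. K_law (fk k)) std_normal_distribution"
  proof
    assume b0: "\<beta> \<longlonglongrightarrow> 0"
    have "filterlim (\<lambda>k. 1 / (\<beta> k)^2) at_top sequentially"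
    proof (rule LIM_at_top_divide)
      show "(\<lambda>k. (\<beta> k)^2) \<longlonglongrightarrow> 0" using tendsto_power[OF b0, of 2] by simp
      show "\<forall>\<^sub>F k in sequentially. 0 < (\<beta> k)^2"
      proof (intro always_eventually allI)
        fix k show "0 < (\<beta> k)^2" using bnd[of k] by simp
      qed
    qed auto
    then have "filterlim fk at_top sequentially"
      by (rule filterlim_at_top_mono) (use bnd in auto)
    from cdf_K_normal[OF this fpos]
    show "weak_conv_m (\<lambda>k. K_law (fk k)) std_normal_distribution"
      unfolding weak_conv_m_def weak_conv_def by blast
  qed
  have B: "\<beta> \<longlonglongrightarrow> 1 \<longrightarrow> weak_conv_m (\<lambda>k. K_law (fk k)) (distr (chi_sq_law 1) borel (\<lambda>x. (x - 1) / sqrt 2))"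
  proof
    assume b1: "\<beta> \<longlonglongrightarrow> 1"
    have l2: "(\<lambda>k. 1 / (\<beta> k)^2) \<longlonglongrightarrow> 1" using tendsto_divide[OF tendsto_const tendsto_power[OF b1, of 2], of 1] by simp
    have l6: "(\<lambda>k. 1 / (\<beta> k)^6) \<longlonglongrightarrow> 1" using tendsto_divide[OF tendsto_const tendsto_power[OF b1, of 6], of 1] by simp
    have "fk \<longlonglongrightarrow> 1"
      by (rule tendsto_sandwich[OF _ _ l2 l6]) (use bnd in auto)
    from cdf_K_cont[OF this fpos]
    have "weak_conv_m (\<lambda>k. K_law (fk k)) (K_law 1)"
      unfolding weak_conv_m_def weak_conv_def by blast
    then show "weak_conv_m (\<lambda>k. K_law (fk k)) (distr (chi_sq_law 1) borel (\<lambda>x. (x - 1) / sqrt 2))"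
      unfolding K_law_def by simp
  qed
  show ?thesis using A B unfolding \<beta>_def fk_def P_def V_def by blast
qed

end
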